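(* Fix a point and real numbers $L_F\neq0$, $L_{FF}$, $L_{FG}$, $L_{GG}$ (values at that point of derivatives of a Lagrangian $L(F,G)$), and an antisymmetric tensor $F_{\mu\nu}$ with invariants $F=F^{\mu\nu}F_{\mu\nu}$, $G=F^{\mu\nu}\tilde F_{\mu\nu}$. Let $f_{\mu\nu}$ be antisymmetric and $k_\lambda$ a covector satisfying (C) $f_{\mu\nu}k_\lambda+f_{\nu\lambda}k_\mu+f_{\lambda\mu}k_\nu=0$, and (E) $L_F f^{\mu\nu}k_\nu+A\,F^{\mu\nu}k_\nu+B\,\tilde F^{\mu\nu}k_\nu=0$, where $\xi=F^{\alpha\beta}f_{\alpha\beta}$, $\zeta=\tilde F^{\alpha\beta}f_{\alpha\beta}$, $A=2(\xi L_{FF}+\zeta L_{FG})$, $B=2(\xi L_{FG}+\zeta L_{GG})$. Suppose $\xi\neq0$ and set $\Omega=\zeta/\xi$. Then: (a) $g_\Omega^{\mu\nu}k_\mu k_\nu=0$, where $$g_\Omega^{\mu\nu}=L_F\eta^{\mu\nu}-4\Big[(L_{FF}+\Omega L_{FG})F^{\mu}{}_{\lambda}F^{\lambda\nu}+(L_{FG}+\Omega L_{GG})F^{\mu}{}_{\lambda}\tilde F^{\lambda\nu}\Big];$$ (b) if moreover $\eta^{\mu\nu}k_\mu k_\nu\neq0$, then $\Omega^2\Omega_1+\Omega\,\Omega_2+\Omega_3=0$, where $\Omega_1=-L_FL_{FG}+2FL_{FG}L_{GG}+G(L_{GG}^2-L_{FG}^2)$, $\Omega_2=(L_F+2GL_{FG})(L_{GG}-L_{FF})+2F(L_{FF}L_{GG}+L_{FG}^2)$,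 $\Omega_3=L_FL_{FG}+2FL_{FF}L_{FG}+G(L_{FG}^2-L_{FF}^2)$.
   Context: Minkowski metric $\eta_{\mu\nu}=\mathrm{diag}(1,-1,-1,-1)$, indices raised/lowered with $\eta$, summation convention. The dual is $\tilde F_{\alpha\beta}=\tfrac12\eta_{\alpha\beta}{}^{\mu\nu}F_{\mu\nu}$ with $\eta_{\alpha\beta\mu\nu}$ the totally antisymmetric Levi-Civita tensor; with these conventions $\tilde F_{\mu\nu}F^{\nu\lambda}=-\tfrac14G\,\delta_\mu^\lambda$ and $\tilde F_{\mu\lambda}\tilde F^{\lambda\nu}-F_{\mu\lambda}F^{\lambda\nu}=\tfrac12F\,\delta_\mu^\nu$. Conditions (C),(E) are the jump conditions for the field equations $\partial_\nu(L_FF^{\mu\nu}+L_G\tilde F^{\mu\nu})=0$ across a wavefront where $\partial_\lambda F_{\mu\nu}$ jumps by $f_{\mu\nu}k_\lambda$. *)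

theory Defs
  imports Complex_Main
begin

text \<open>Indices range over {0,1,2,3}
 (natural numbers below 4). A rank-2 tensor is a function nat => nat => real,
 a covector is nat => real; all tensors given as arguments carry LOWER indices.\<close>

definition eta :: "nat \<Rightarrow> nat \<Rightarrow> real" where
  "eta \<mu> \<nu> = (if \<mu> = \<nu> then (if \<mu> = 0 then 1 else -1) else 0)"

text \<open>Totally antisymmetric Levi-Civita tensor with lower indices, eps 0 1 2 3 = 1.\<close>
definition eps :: "nat \<Rightarrow> nat \<Rightarrow> nat \<Rightarrow> nat \<Rightarrow> real" where
  "eps a b c d = (if a < 4 \<and> b < 4 \<and> c < 4 \<and> d < 4 then
     of_int (sgn ((int b - int a) * (int c - int a) * (int d - int a)
                  * (int c - int b) * (int d - int b) * (int d - int c))) else 0)"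

definition raise2 :: "(nat \<Rightarrow> nat \<Rightarrow> real) \<Rightarrow> nat \<Rightarrow> nat \<Rightarrow> real" where
  "raise2 T \<mu> \<nu> = (\<Sum>\<alpha><4. \<Sum>\<beta><4. eta \<mu> \<alpha> * eta \<nu> \<beta> * T \<alpha> \<beta>)"

definition raise1 :: "(nat \<Rightarrow> nat \<Rightarrow> real) \<Rightarrow> nat \<Rightarrow> nat \<Rightarrow> real" where
  "raise1 T \<mu> \<nu> = (\<Sum>\<alpha><4. eta \<mu> \<alpha> * T \<alpha> \<nu>)"

definition dual :: "(nat \<Rightarrow> nat \<Rightarrow> real) \<Rightarrow> nat \<Rightarrow> nat \<Rightarrow> real" where
  "dual F a b = 1/2 * (\<Sum>\<mu><4. \<Sum>\<nu><4. eps a b \<mu> \<nu> * raise2 F \<mu> \<nu>)"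

definition contr :: "(nat \<Rightarrow> nat \<Rightarrow> real) \<Rightarrow> (nat \<Rightarrow> nat \<Rightarrow> real) \<Rightarrow> real" where
  "contr T S = (\<Sum>\<alpha><4. \<Sum>\<beta><4. raise2 T \<alpha> \<beta> * S \<alpha> \<beta>)"

definition antisym2 :: "(nat \<Rightarrow> nat \<Rightarrow> real) \<Rightarrow> bool" where
  "antisym2 T \<longleftrightarrow> (\<forall>\<mu><4. \<forall>\<nu><4. T \<mu> \<nu> = - T \<nu> \<mu>)"

definition invF :: "(nat \<Rightarrow> nat \<Rightarrow> real) \<Rightarrow> real" where
  "invF F = contr F F"

definition invG :: "(nat \<Rightarrow> nat \<Rightarrow> real) \<Rightarrow> real" where
  "invG F = contr F (dual F)"

definition gOmega :: "real \<Rightarrow> real \<Rightarrow> real \<Rightarrow> real \<Rightarrow> (nat \<Rightarrow> nat \<Rightarrow> real) \<Rightarrow> real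
    \<Rightarrow> nat \<Rightarrow> nat \<Rightarrow> real" where
  "gOmega LF LFF LFG LGG F \<Omega> \<mu> \<nu> =
     LF * eta \<mu> \<nu> - 4 * ((LFF + \<Omega> * LFG) * (\<Sum>l<4. raise1 F \<mu> l * raise2 F l \<nu>)
                       + (LFG + \<Omega> * LGG) * (\<Sum>l<4. raise1 F \<mu> l * raise2 (dual F) l \<nu>))"

definition quad :: "(nat \<Rightarrow> nat \<Rightarrow> real) \<Rightarrow> (nat \<Rightarrow> real) \<Rightarrow> real" where
  "quad Q k = (\<Sum>\<mu><4. \<Sum>\<nu><4. Q \<mu> \<nu> * k \<mu> * k \<nu>)"

end

theory Submission
  imports Defs
begin
lemma sum4: "(\<Sum>i<(4::nat). g i) = g 0 + g 1 + g 2 + g 3"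
  by (simp add: eval_nat_numeral)
lemma all4: "(\<forall>i<(4::nat). P i) \<longleftrightarrow> P 0 \<and> P 1 \<and> P 2 \<and> P 3"
  by (auto simp add: eval_nat_numeral less_Suc_eq)

lemma anti:
  assumes "antisym2 F"
  shows "F 0 0 = 0" "F 1 1 = 0" "F 2 2 = 0" "F 3 3 = 0"
   "F 1 0 = - F 0 1" "F 2 0 = - F 0 2" "F 3 0 = - F 0 3"
   "F 2 1 = - F 1 2" "F 3 1 = - F 1 3" "F 3 2 = - F 2 3"
   "F (Suc 0) (Suc 0) = 0" "F (Suc 0) 0 = - F 0 (Suc 0)" "F 2 (Suc 0) = - F (Suc 0) 2" "F 3 (Suc 0) = - F (Suc 0) 3"
proof -
  have h: "\<And>a b. a<4 \<Longrightarrow> b<4 \<Longrightarrow> F a b = - F b a" using assms unfolding antisym2_def by blast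
  show "F 0 0 = 0" using h[of 0 0] by simp
  show "F 1 1 = 0" using h[of 1 1] by simp
  show "F 2 2 = 0" using h[of 2 2] by simp
  show "F 3 3 = 0" using h[of 3 3] by simp
  show "F 1 0 = - F 0 1" using h[of 1 0] by simp
  show "F 2 0 = - F 0 2" using h[of 2 0] by simp
  show "F 3 0 = - F 0 3" using h[of 3 0] by simp
  show "F 2 1 = - F 1 2" using h[of 2 1] by simp
  show "F 3 1 = - F 1 3" using h[of 3 1] by simp
  show "F 3 2 = - F 2 3" using h[of 3 2] by simp
  show "F (Suc 0) (Suc 0) = 0" using h[of 1 1] by simp
  show "F (Suc 0) 0 = - F 0 (Suc 0)" using h[of 1 0] by simp
  show "F 2 (Suc 0) = - F (Suc 0) 2" using h[of 2 1] by simp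
  show "F 3 (Suc 0) = - F (Suc 0) 3" using h[of 3 1] by simp
qed

definition vec :: "(nat \<Rightarrow> nat \<Rightarrow> real) \<Rightarrow> (nat \<Rightarrow> real) \<Rightarrow> nat \<Rightarrow> real" where
  "vec T k m = (\<Sum>n<4. raise2 T m n * k n)"
definition dot :: "(nat \<Rightarrow> real) \<Rightarrow> (nat \<Rightarrow> real) \<Rightarrow> real" where
  "dot u w = (\<Sum>m<4. eta m m * u m * w m)"
definition M1 :: "(nat \<Rightarrow> nat \<Rightarrow> real) \<Rightarrow> nat \<Rightarrow> nat \<Rightarrow> real" where
  "M1 F m n = (\<Sum>l<4. raise1 F m l * raise2 F l n)"
definition M2 :: "(nat \<Rightarrow> nat \<Rightarrow> real) \<Rightarrow> nat \<Rightarrow> nat \<Rightarrow> real" where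
  "M2 F m n = (\<Sum>l<4. raise1 F m l * raise2 (dual F) l n)"

lemma dot_comm: "dot u w = dot w u"
  unfolding dot_def by (simp add: mult.commute mult.left_commute)

lemma dual_anti: "antisym2 F \<Longrightarrow> antisym2 (dual F)"
  unfolding antisym2_def[of "dual F"] all4 dual_def raise2_def sum4
  by (simp add: eta_def eps_def anti)

lemma L_vw: "antisym2 F \<Longrightarrow> dot (vec F k) (vec (dual F) k) = invG F / 4 * quad eta k"
  unfolding invG_def contr_def quad_def dual_def raise2_def sum4 vec_def dot_def
  by (simp add: eta_def eps_def anti field_simps)

lemma L_ww: "antisym2 F \<Longrightarrow> dot (vec (dual F) k) (vec (dual F) k) = dot (vec F k) (vec F k) - invF F / 2 * quad eta k"
  unfolding invF_def contr_def quad_def dual_def raise2_def sum4 vec_def dot_def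
  by (simp add: eta_def eps_def anti field_simps)

lemma L_M1: "antisym2 F \<Longrightarrow> quad (M1 F) k = - dot (vec F k) (vec F k)"
  unfolding M1_def quad_def raise1_def raise2_def sum4 vec_def dot_def
  by (simp add: eta_def anti field_simps)

lemma L_M2: "antisym2 F \<Longrightarrow> quad (M2 F) k = - invG F / 4 * quad eta k"
  unfolding M2_def invG_def contr_def quad_def dual_def raise1_def raise2_def sum4 vec_def dot_def
  by (simp add: eta_def eps_def anti field_simps)

lemma L_g: "quad (gOmega LF LFF LFG LGG F \<Omega>) k
   = LF * quad eta k - 4 * ((LFF + \<Omega> * LFG) * quad (M1 F) k + (LFG + \<Omega> * LGG) * quad (M2 F) k)"
proof -
  have "gOmega LF LFF LFG LGG F \<Omega> = (\<lambda>m n. LF * eta m n - 4 * ((LFF + \<Omega> * LFG) * M1 F m n + (LFG + \<Omega> * LGG) * M2 F m n))"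
    by (simp add: fun_eq_iff gOmega_def M1_def M2_def)
  then show ?thesis unfolding quad_def sum4 by (simp add: algebra_simps)
qed

lemma L_va:
  assumes "antisym2 F" "antisym2 f"
    and C: "\<forall>\<mu><4. \<forall>\<nu><4. \<forall>l<4. f \<mu> \<nu> * k l + f \<nu> l * k \<mu> + f l \<mu> * k \<nu> = 0"
  shows "dot (vec F k) (vec f k) = contr F f * quad eta k / 2"
proof -
  have z: "(\<Sum>\<mu><4. \<Sum>\<nu><4. \<Sum>l<4. raise2 F \<mu> \<nu> * (eta l l * k l) * (f \<mu> \<nu> * k l + f \<nu> l * k \<mu> + f l \<mu> * k \<nu>)) = 0"
    using C by simp
  have "(\<Sum>\<mu><4. \<Sum>\<nu><4. \<Sum>l<4. raise2 F \<mu> \<nu> * (eta l l * k l) * (f \<mu> \<nu> * k l + f \<nu> l * k \<mu> + f l \<mu> * k \<nu>))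
     = contr F f * quad eta k - 2 * dot (vec F k) (vec f k)"
    unfolding contr_def quad_def raise2_def sum4 vec_def dot_def
    by (simp add: eta_def anti assms field_simps)
  with z show ?thesis by simp
qed

lemma L_lin:
  assumes "\<forall>m<4. LF * a m + A * b m + B * c m = 0"
  shows "LF * dot u a + A * dot u b + B * dot u c = 0"
proof -
  have "LF * dot u a + A * dot u b + B * dot u c = (\<Sum>m<4. eta m m * u m * (LF * a m + A * b m + B * c m))"
    unfolding dot_def sum4 by (simp add: algebra_simps)
  also have "\<dots> = 0" using assms by simp
  finally show ?thesis .
qed
theorem mainTheorem3:
  fixes LF LFF LFG LGG :: real
    and F f :: "nat \<Rightarrow> nat \<Rightarrow> real"
    and k :: "nat \<Rightarrow> real"
  defines "\<xi> \<equiv> contr F f"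
    and "\<zeta> \<equiv> contr (dual F) f"
  defines "A \<equiv> 2 * (\<xi> * LFF + \<zeta> * LFG)"
    and "B \<equiv> 2 * (\<xi> * LFG + \<zeta> * LGG)"
  defines "\<Omega> \<equiv> \<zeta> / \<xi>"
  assumes LF_nz: "LF \<noteq> 0"
    and F_anti: "antisym2 F"
    and f_anti: "antisym2 f"
    and C: "\<forall>\<mu><4. \<forall>\<nu><4. \<forall>l<4. f \<mu> \<nu> * k l + f \<nu> l * k \<mu> + f l \<mu> * k \<nu> = 0"
    and E: "\<forall>\<mu><4. LF * (\<Sum>\<nu><4. raise2 f \<mu> \<nu> * k \<nu>) + A * (\<Sum>\<nu><4. raise2 F \<mu> \<nu> * k \<nu>)
                    + B * (\<Sum>\<nu><4. raise2 (dual F) \<mu> \<nu> * k \<nu>) = 0"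
    and xi_nz: "\<xi> \<noteq> 0"
  shows "quad (gOmega LF LFF LFG LGG F \<Omega>) k = 0
     \<and> (quad eta k \<noteq> 0 \<longrightarrow>
          (let G = invG F; FF = invF F;
               \<Omega>1 = - LF * LFG + 2 * FF * LFG * LGG + G * (LGG^2 - LFG^2);
               \<Omega>2 = (LF + 2 * G * LFG) * (LGG - LFF) + 2 * FF * (LFF * LGG + LFG^2);
               \<Omega>3 = LF * LFG + 2 * FF * LFF * LFG + G * (LFG^2 - LFF^2)
           in \<Omega>^2 * \<Omega>1 + \<Omega> * \<Omega>2 + \<Omega>3 = 0))"
proof -
  define q where "q = quad eta k"
  define X where "X = dot (vec F k) (vec F k)"
  define G where "G = invG F"
  define FF where "FF = invF F"
  have Ev: "\<forall>m<4. LF * vec f k m + A * vec F k m + B * vec (dual F) k m = 0"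
    using E unfolding vec_def by simp
  have e1: "LF * (\<xi> * q / 2) + A * X + B * (G / 4 * q) = 0"
    using L_lin[OF Ev, of "vec F k"] L_va[OF F_anti f_anti C] L_vw[OF F_anti]
    unfolding \<xi>_def q_def X_def G_def by simp
  have e2: "LF * (\<zeta> * q / 2) + A * (G / 4 * q) + B * (X - FF / 2 * q) = 0"
    using L_lin[OF Ev, of "vec (dual F) k"] L_va[OF dual_anti[OF F_anti] f_anti C] L_vw[OF F_anti]
      L_ww[OF F_anti] dot_comm[of "vec (dual F) k" "vec F k"]
    unfolding \<zeta>_def q_def X_def G_def FF_def by simp
  have zeta: "\<zeta> = \<Omega> * \<xi>" unfolding \<Omega>_def using xi_nz by simp
  have g: "quad (gOmega LF LFF LFG LGG F \<Omega>) k = LF * q + 4 * (LFF + \<Omega> * LFG) * X + (LFG + \<Omega> * LGG) * G * q"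
    unfolding L_g L_M1[OF F_anti] L_M2[OF F_anti] q_def X_def G_def by (simp add: algebra_simps)
  have "\<xi> * quad (gOmega LF LFF LFG LGG F \<Omega>) k = 2 * (LF * (\<xi> * q / 2) + A * X + B * (G / 4 * q))"
    unfolding g A_def B_def zeta by (simp add: algebra_simps)
  with e1 xi_nz have pa: "quad (gOmega LF LFF LFG LGG F \<Omega>) k = 0" by simp
  define a where "a = 2 * (LFF + \<Omega> * LFG)"
  define b where "b = 2 * (LFG + \<Omega> * LGG)"
  have AB: "A = \<xi> * a" "B = \<xi> * b" unfolding A_def B_def a_def b_def zeta by (simp_all add: algebra_simps)
  have E1: "LF * q / 2 + a * X + b * (G / 4 * q) = 0"
  proof -
    have "\<xi> * (LF * q / 2 + a * X + b * (G / 4 * q)) = 0" using e1 unfolding AB by (simp add: algebra_simps)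
    then show ?thesis using xi_nz by simp
  qed
  have E2: "LF * \<Omega> * q / 2 + a * (G / 4 * q) + b * (X - FF / 2 * q) = 0"
  proof -
    have "\<xi> * (LF * \<Omega> * q / 2 + a * (G / 4 * q) + b * (X - FF / 2 * q)) = 0" using e2 unfolding AB zeta by (simp add: algebra_simps)
    then show ?thesis using xi_nz by simp
  qed
  define T where "T = \<Omega>^2 * (- LF * LFG + 2 * FF * LFG * LGG + G * (LGG^2 - LFG^2))
     + \<Omega> * ((LF + 2 * G * LFG) * (LGG - LFF) + 2 * FF * (LFF * LGG + LFG^2))
     + (LF * LFG + 2 * FF * LFF * LFG + G * (LFG^2 - LFF^2))"
  have "q * T = (b * (LF * q / 2 + a * X + b * (G / 4 * q)) - a * (LF * \<Omega> * q / 2 + a * (G / 4 * q) + b * (X - FF / 2 * q)))"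
    unfolding T_def a_def b_def by (simp add: algebra_simps power2_eq_square)
  with E1 E2 have qT: "q * T = 0" by simp
  have "q \<noteq> 0 \<longrightarrow> T = 0" using qT by (simp only: mult_eq_0_iff) blast
  then have "quad eta k \<noteq> 0 \<longrightarrow> T = 0" unfolding q_def .
  then show ?thesis
    using pa unfolding Let_def T_def G_def FF_def by blast
qed

end
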